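(* Let $n$ be odd with $n\mid(q+1)$, let $m$ be a positive even integer, $b$ a positive integer with $\gcd(b,n)=1$, and $\delta$ an even integer with $2\le\delta\le\frac{n-m+1}{2}$. Put $$A=\{\alpha^{0}\}\cup\{\alpha^{\pm\frac{n+2j-1}{2}b}: j=1,\dots,\tfrac{m}{2}\},\qquad B=\{\alpha^{jb}:-\tfrac{\delta-2}{2}\le j\le\tfrac{\delta-2}{2}\},$$ and let $d_A^{\perp}$ be the minimum distance of the dual of the cyclic code of length $n$ over $\mathbb{F}_{q^2}$ with complete defining set $A$. Then $C_{AB}$ is a cyclic $(d_A^{\perp}-\delta+1,\delta)$-LRC over $\mathbb{F}_q$ with dimension $n-m-2\delta+3$. If moreover $\delta-2<n-m-d_A^{\perp}$, then $C_{AB}$ is optimal and has minimum distance $m+\delta-1$.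
   Context: Let $q$ be a prime power and $n\mid(q+1)$, so the set $R_n$ of all $n$-th roots of unity lies in $\mathbb{F}_{q^2}$; let $\alpha\in\mathbb{F}_{q^2}$ be a primitive $n$-th root of unity. For $A,B\subseteq R_n$, $AB=\{\beta\gamma:\beta\in A,\gamma\in B\}$. For $Z\subseteq R_n$, the cyclic code of length $n$ over $\mathbb{F}_{q^2}$ with complete defining set $Z$ is the ideal generated by $\prod_{\beta\in Z}(x-\beta)$ in $\mathbb{F}_{q^2}[x]/(x^n-1)$; if $\{j:\alpha^j\in Z\}$ is closed under $j\mapsto-j\bmod n$ (a union of $q$-cyclotomic cosets), $C_Z$ denotes the cyclic code of length $n$ over $\mathbb{F}_q$ generated by this polynomial, which lies in $\mathbb{F}_q[x]$. Locality: for a linear code $C\subseteq\mathbb{F}_q^n$ and integers $r\ge1$, $\delta\ge2$, the $i$-th coordinate has $(r,\delta)$-locality if there is $S_i\subseteq\{1,\dots,n\}$ with $i\in S_i$, $|S_i|\le r+\delta-1$ such that the punctured code $C|_{S_i}$ has minimum distance at least $\delta$; $C$ is an $(r,\delta)$-LRC if every coordinate has $(r,\delta)$-locality. An $[n,k,d]$ $(r,\delta)$-LRC is optimal if $d=n-k-(\lceil k/r\rceil-1)(\delta-1)+1$ (always an upper bound on $d$). *)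

theory Defs
  imports "HOL-Computational_Algebra.Computational_Algebra"
begin

text \<open>Vectors of length n over a field are represented by polynomials of degree < n
  (coordinate i = coefficient of x^i, i = 0..n-1).\<close>

definition prime_power :: "nat \<Rightarrow> bool" where
  "prime_power q \<longleftrightarrow> (\<exists>p k. prime p \<and> k > 0 \<and> q = p ^ k)"

definition subfield_q :: "nat \<Rightarrow> 'a::field set" where
  "subfield_q q = {x. x ^ q = x}"

definition primitive_root_unity :: "nat \<Rightarrow> 'a::field \<Rightarrow> bool" where
  "primitive_root_unity n a \<longleftrightarrow> n > 0 \<and> a ^ n = 1 \<and> (\<forall>k. 0 < k \<and> k < n \<longrightarrow> a ^ k \<noteq> 1)"

text \<open>alpha to an integer exponent, for alpha an n-th root of unity\<close>
definition ipow :: "nat \<Rightarrow> 'a::field \<Rightarrow> int \<Rightarrow> 'a" where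
  "ipow n a e = a ^ nat (e mod int n)"

definition set_mult :: "'a::field set \<Rightarrow> 'a set \<Rightarrow> 'a set" where
  "set_mult A B = {x * y | x y. x \<in> A \<and> y \<in> B}"

definition gen_poly :: "'a::field set \<Rightarrow> 'a poly" where
  "gen_poly Z = (\<Prod>\<beta>\<in>Z. [:- \<beta>, 1:])"

definition xn_minus_1 :: "nat \<Rightarrow> 'a::field poly" where
  "xn_minus_1 n = monom 1 n - 1"

text \<open>Cyclic code of length n over the whole field with complete defining set Z:
  the ideal generated by gen_poly Z in F[x]/(x^n-1), elements as reduced representatives.\<close>
definition cyclic_code :: "nat \<Rightarrow> 'a::field set \<Rightarrow> 'a poly set" where
  "cyclic_code n Z = {(f * gen_poly Z) mod xn_minus_1 n | f. True}"

definition cyclic_code_q :: "nat \<Rightarrow> nat \<Rightarrow> 'a::field set \<Rightarrow> 'a poly set" where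
  "cyclic_code_q q n Z = {(f * gen_poly Z) mod xn_minus_1 n | f.
       \<forall>i. coeff f i \<in> subfield_q q}"

definition dual_code :: "nat \<Rightarrow> 'a::field poly set \<Rightarrow> 'a poly set" where
  "dual_code n C = {v. degree v < n \<and> (\<forall>c\<in>C. (\<Sum>i<n. coeff v i * coeff c i) = 0)}"

definition weight :: "nat \<Rightarrow> 'a::zero poly \<Rightarrow> nat" where
  "weight n c = card {i. i < n \<and> coeff c i \<noteq> 0}"

definition min_dist :: "nat \<Rightarrow> 'a::zero poly set \<Rightarrow> nat" where
  "min_dist n C = Min {weight n c | c. c \<in> C \<and> c \<noteq> 0}"

definition code_dim :: "nat \<Rightarrow> 'a poly set \<Rightarrow> nat" where
  "code_dim q C = (THE k. card C = q ^ k)"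

definition has_locality :: "nat \<Rightarrow> 'a::zero poly set \<Rightarrow> int \<Rightarrow> int \<Rightarrow> nat \<Rightarrow> bool" where
  "has_locality n C r \<delta> i \<longleftrightarrow>
     (\<exists>S. S \<subseteq> {..<n} \<and> i \<in> S \<and> int (card S) \<le> r + \<delta> - 1 \<and>
        (\<forall>c\<in>C. (\<exists>j\<in>S. coeff c j \<noteq> 0) \<longrightarrow> int (card {j\<in>S. coeff c j \<noteq> 0}) \<ge> \<delta>))"

definition is_LRC :: "nat \<Rightarrow> 'a::zero poly set \<Rightarrow> int \<Rightarrow> int \<Rightarrow> bool" where
  "is_LRC n C r \<delta> \<longleftrightarrow> r \<ge> 1 \<and> \<delta> \<ge> 2 \<and> (\<forall>i<n. has_locality n C r \<delta> i)"

definition optimal_LRC :: "nat \<Rightarrow> nat \<Rightarrow> 'a::zero poly set \<Rightarrow> int \<Rightarrow> int \<Rightarrow> bool" where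
  "optimal_LRC q n C r \<delta> \<longleftrightarrow> is_LRC n C r \<delta> \<and>
     (let k = int (code_dim q C) in
      int (min_dist n C) = int n - k - (\<lceil>real_of_int k / real_of_int r\<rceil> - 1) * (\<delta> - 1) + 1)"

end

theory Submission
  imports Defs "HOL-Number_Theory.Cong" "HOL-Library.FuncSet"
begin

definition vec :: "nat \<Rightarrow> (nat \<Rightarrow> 'a::comm_ring_1) \<Rightarrow> 'a poly" where
  "vec n a = (\<Sum>i<n. monom (a i) i)"

lemma coeff_vec: "coeff (vec n a) j = (if j < n then a j else 0)"
  by (simp add: vec_def coeff_sum coeff_monom)

lemma poly_vec: "poly (vec n a) x = (\<Sum>i<n. a i * x^i)"
  by (simp add: vec_def poly_sum poly_monom)

lemma bounded_poly:
  fixes c :: "'a::comm_semiring_1 poly"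
  assumes "\<forall>i\<ge>n. coeff c i = 0"
  shows "poly c x = (\<Sum>i<n. coeff c i * x^i)"
proof (cases "c = 0")
  case True then show ?thesis by simp
next
  case False
  then have "coeff c (degree c) \<noteq> 0" by simp
  with assms have d: "degree c < n" by (meson not_le)
  have "poly c x = (\<Sum>i\<le>degree c. coeff c i * x ^ i)" by (rule poly_altdef)
  also have "\<dots> = (\<Sum>i<n. coeff c i * x^i)"
    by (rule sum.mono_neutral_left) (use d in \<open>auto simp: coeff_eq_0\<close>)
  finally show ?thesis .
qed

lemma prod_dvd:
  fixes p :: "'a::field poly"
  assumes "finite Z" "\<forall>z\<in>Z. poly p z = 0"
  shows "(\<Prod>z\<in>Z. [:-z,1:]) dvd p"
  using assms
proof (induction Z arbitrary: p rule: finite_induct)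
  case empty then show ?case by simp
next
  case (insert a Z)
  from insert.prems have "[:-a,1:] dvd p" by (simp add: poly_eq_0_iff_dvd)
  then obtain p' where p': "p = [:-a,1:] * p'" by (elim dvdE)
  have "\<forall>z\<in>Z. poly p' z = 0"
  proof
    fix z assume z: "z \<in> Z"
    with insert.hyps have "z \<noteq> a" by auto
    moreover have "poly p z = 0" using insert.prems z by auto
    ultimately show "poly p' z = 0" using p' by simp
  qed
  then have "(\<Prod>z\<in>Z. [:-z,1:]) dvd p'" by (rule insert.IH)
  moreover have "(\<Prod>z\<in>insert a Z. [:-z,1:]) = [:-a,1:] * (\<Prod>z\<in>Z. [:-z,1:])"
    using insert.hyps by simp
  ultimately show ?case using p' by (metis mult_dvd_mono dvd_refl)
qed

lemma power_mod_n: "(x::'a::monoid_mult)^n = 1 \<Longrightarrow> x^k = x^(k mod n)"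
proof -
  assume "x^n = 1"
  have "x^k = x^(n * (k div n) + k mod n)" by simp
  also have "\<dots> = (x^n)^(k div n) * x^(k mod n)" by (metis power_mult power_add)
  finally show ?thesis
    using \<open>x^n=1\<close> by simp
qed

lemma fin_pow_card:
  fixes x :: "'a::{field,finite}"
  shows "x ^ card (UNIV :: 'a set) = x"
proof (cases "x = 0")
  case False
  have "x * (\<Prod>y\<in>UNIV-{0}. x * y) = x * x ^ (card (UNIV :: 'a set) - 1) * \<Prod>(UNIV-{0})"
    by (simp add: prod.distrib mult_ac)
  also have "x * x ^ (card (UNIV :: 'a set) - 1) = x ^ Suc (card (UNIV :: 'a set) - 1)"
    by (subst power_Suc) auto
  also have "Suc (card (UNIV :: 'a set) - 1) = card (UNIV :: 'a set)"
    using finite_UNIV_card_ge_0[where ?'a = 'a] by simp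
  also have "(\<Prod>y\<in>UNIV-{0}. x * y) = (\<Prod>y\<in>UNIV-{0}. y)"
    by (rule prod.reindex_bij_witness[of _ "\<lambda>y. y / x" "\<lambda>y. x * y"]) (use False in auto)
  finally show ?thesis
    by simp
qed (use finite_UNIV_card_ge_0[where ?'a = 'a] in auto)

lemma CHAR_dvd_card: "CHAR('a::{field,finite}) dvd card (UNIV :: 'a set)"
proof -
  define c where "c = CHAR('a)"
  have cpos: "c > 0" unfolding c_def by (rule finite_imp_CHAR_pos) simp
  define f :: "'a \<Rightarrow> 'a set" where "f x = (\<lambda>i. x + of_nat i) ` {..<c}" for x
  have ofn: "(of_nat i :: 'a) = of_nat j \<longleftrightarrow> i mod c = j mod c" for i j
    by (simp add: c_def of_nat_eq_iff_cong_CHAR cong_def)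
  have cardf: "card (f x) = c" for x
  proof -
    have "inj_on (\<lambda>i. x + of_nat i) {..<c}"
      by (auto simp: inj_on_def ofn)
    then show ?thesis by (simp add: f_def card_image)
  qed
  have sub: "f z = f x" if "z \<in> f x" for z x
  proof -
    obtain i where i: "i < c" "z = x + of_nat i" using \<open>z \<in> f x\<close> by (auto simp: f_def)
    show ?thesis
    proof
      show "f z \<subseteq> f x"
      proof
        fix w assume "w \<in> f z"
        then obtain j where j: "j < c" "w = z + of_nat j" by (auto simp: f_def)
        have "(of_nat (i+j) :: 'a) = of_nat ((i+j) mod c)" by (simp only: ofn mod_mod_trivial)
        then have "w = x + of_nat ((i+j) mod c)"
          using i j by (simp add: add.assoc flip: of_nat_add)
        then show "w \<in> f x" unfolding f_def using cpos by auto
      qed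
    next
      show "f x \<subseteq> f z"
      proof
        fix w assume "w \<in> f x"
        then obtain j where j: "j < c" "w = x + of_nat j" by (auto simp: f_def)
        have "(i + (j + c - i) mod c) mod c = j mod c"
          using i by (simp add: mod_add_right_eq)
        then have "(of_nat (i + (j + c - i) mod c) :: 'a) = of_nat j"
          by (simp only: ofn)
        then have "w = z + of_nat ((j + c - i) mod c)"
          using i j by (simp add: add.assoc flip: of_nat_add)
        then show "w \<in> f z" unfolding f_def using cpos by auto
      qed
    qed
  qed
  have disj: "\<forall>c1\<in>range f. \<forall>c2\<in>range f. c1 \<noteq> c2 \<longrightarrow> c1 \<inter> c2 = {}"
    using sub by blast
  have "c * card (range f) = card (\<Union>(range f))"
    using disj cardf by (intro card_partition) auto
  moreover have "\<Union>(range f) = UNIV"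
  proof -
    have "x \<in> f x" for x unfolding f_def using cpos by force
    then show ?thesis by blast
  qed
  ultimately show ?thesis unfolding c_def by (metis dvd_triv_left)
qed

lemma CHAR_eq_p:
  assumes "prime p" "card (UNIV :: 'a::{field,finite} set) = p ^ e"
  shows "CHAR('a) = p"
proof -
  have pc: "prime CHAR('a)"
    by (rule prime_CHAR_semidom, rule finite_imp_CHAR_pos) simp
  have "CHAR('a) dvd p ^ e" using CHAR_dvd_card[where 'a='a] assms(2) by simp
  then have "CHAR('a) dvd p" using pc prime_dvd_power by blast
  then show ?thesis using pc assms(1) primes_dvd_imp_eq by blast
qed


locale fq =
  fixes q :: nat and T :: "'a::{field,finite} itself"
  assumes frob_add: "\<And>x y::'a. (x + y)^q = x^q + y^q"
    and card_q: "card (UNIV :: 'a set) = q^2"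
    and q2: "q \<ge> 2"
begin

lemma q_pos: "q > 0" using q2 by simp

lemma frob_0: "(0::'a)^q = 0" using q_pos by simp

lemma frob_minus: "(-x::'a)^q = - (x^q)"
proof -
  have "(x + -x)^q = x^q + (-x)^q" by (rule frob_add)
  then have "x^q + (-x)^q = 0" using frob_0 by simp
  then show ?thesis by (metis add.commute eq_neg_iff_add_eq_0)
qed

lemma frob_diff: "(x - y::'a)^q = x^q - y^q"
  using frob_add[of x "-y"] frob_minus[of y] by simp

lemma frob_sum: "(\<Sum>i\<in>S. f i :: 'a)^q = (\<Sum>i\<in>S. (f i)^q)"
  by (induction S rule: infinite_finite_induct) (auto simp: frob_0 frob_add)

lemma frob_q2: "(x::'a)^(q*q) = x"
  using fin_pow_card[of x] card_q by (simp add: power2_eq_square)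

lemma frob_inj: "(x::'a)^q = y^q \<Longrightarrow> x = y"
proof -
  assume a: "x^q = y^q"
  have "x = (x^q)^q" using frob_q2[of x] by (simp add: power_mult)
  also have "\<dots> = (y^q)^q" using a by simp
  also have "\<dots> = y" using frob_q2[of y] by (simp add: power_mult)
  finally show ?thesis .
qed

definition K :: "'a set" where "K = subfield_q q"

lemma K_iff: "x \<in> K \<longleftrightarrow> x^q = x" by (simp add: K_def subfield_q_def)

lemma card_K: "card K = q"
proof -
  define P1 :: "'a poly" where "P1 = monom 1 q - [:0,1:]"
  have polyP1: "poly P1 x = x^q - x" for x by (simp add: P1_def poly_monom)
  have "coeff P1 q = 1" using q2 by (simp add: P1_def coeff_pCons split: nat.split)
  then have P1nz: "P1 \<noteq> 0" by auto
  have degP1: "degree P1 \<le> q"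
    unfolding P1_def using q2
    by (intro order.trans[OF degree_diff_le_max]) (auto simp: degree_monom_le)
  have Ksub: "K \<subseteq> {x. poly P1 x = 0}" by (auto simp: K_iff polyP1)
  have le: "card K \<le> q"
    using card_mono[OF poly_roots_finite[OF P1nz] Ksub] card_poly_roots_bound[OF P1nz] degP1 by linarith
  define Q where "Q = P1^(q-1) + 1"
  have polyQ: "poly Q x = (x^q - x)^(q-1) + 1" for x by (simp add: Q_def polyP1)
  have "poly Q 0 = 1" using q2 by (simp add: polyQ frob_0)
  then have Qnz: "Q \<noteq> 0" by auto
  have degQ: "degree Q \<le> q * (q-1)"
  proof -
    have "degree (P1^(q-1)) \<le> degree P1 * (q-1)" by (rule degree_power_le)
    also have "\<dots> \<le> q * (q-1)" using degP1 by simp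
    finally show ?thesis unfolding Q_def
      by (intro order.trans[OF degree_add_le_max]) auto
  qed
  have "UNIV \<subseteq> K \<union> {x. poly Q x = 0}"
  proof
    fix x :: 'a
    show "x \<in> K \<union> {x. poly Q x = 0}"
    proof (cases "x \<in> K")
      case False
      define y where "y = x^q - x"
      have ynz: "y \<noteq> 0" using False by (simp add: y_def K_iff)
      have "y^q = x^(q*q) - x^q" by (simp add: y_def frob_diff power_mult)
      also have "\<dots> = - y" by (simp add: frob_q2 y_def)
      finally have "y^q + y = 0" by simp
      moreover have "y^q = y * y^(q-1)"
      proof -
        have "q = Suc (q-1)" using q_pos by simp
        then have "y^q = y^(Suc (q-1))" by (rule arg_cong)
        then show ?thesis by (simp only: power_Suc)
      qed
      ultimately have "y * (y^(q-1) + 1) = 0" by (simp add: algebra_simps)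
      then have "y^(q-1) + 1 = 0" using ynz by simp
      then show ?thesis by (simp add: polyQ y_def)
    qed simp
  qed
  then have "card (UNIV::'a set) \<le> card (K \<union> {x. poly Q x = 0})"
    by (intro card_mono) auto
  also have "\<dots> \<le> card K + card {x. poly Q x = 0}" by (rule card_Un_le)
  also have "\<dots> \<le> card K + q * (q-1)" using card_poly_roots_bound[OF Qnz] degQ by simp
  finally have "q * q \<le> card K + q * (q - 1)" using card_q by (simp add: power2_eq_square)
  moreover have "q * (q - 1) = q * q - q" by (simp add: diff_mult_distrib2)
  moreover have "q \<le> q * q" using q_pos by simp
  ultimately have "q \<le> card K" by arith
  with le show ?thesis by simp
qed

definition frobp :: "'a poly \<Rightarrow> 'a poly" where "frobp p = map_poly (\<lambda>x. x^q) p"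

lemma coeff_frobp: "coeff (frobp p) i = (coeff p i)^q"
  by (simp add: frobp_def coeff_map_poly frob_0)

lemma frobp_add: "frobp (a + b) = frobp a + frobp b"
  by (simp add: poly_eq_iff coeff_frobp frob_add)

lemma frobp_diff: "frobp (a - b) = frobp a - frobp b"
  by (simp add: poly_eq_iff coeff_frobp frob_diff)

lemma frobp_mult: "frobp (a * b) = frobp a * frobp b"
  by (simp add: poly_eq_iff coeff_frobp coeff_mult frob_sum power_mult_distrib)

lemma frobp_1: "frobp 1 = 1"
  by (simp add: poly_eq_iff coeff_frobp coeff_1 frob_0)

lemma frobp_0: "frobp 0 = 0"
  by (simp add: poly_eq_iff coeff_frobp frob_0)

lemma frobp_prod: "frobp (\<Prod>i\<in>S. f i) = (\<Prod>i\<in>S. frobp (f i))"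
  by (induction S rule: infinite_finite_induct) (auto simp: frobp_1 frobp_mult)

lemma degree_frobp: "degree (frobp p) = degree p"
  unfolding frobp_def by (rule degree_map_poly) simp

lemma frobp_id_iff: "frobp p = p \<longleftrightarrow> (\<forall>i. coeff p i \<in> K)"
  by (simp add: poly_eq_iff coeff_frobp K_iff)

lemma frobp_divmod:
  assumes "frobp p = p" "frobp d = d"
  shows "frobp (p div d) = p div d \<and> frobp (p mod d) = p mod d"
proof -
  have "(p div d, p mod d) = (frobp (p div d), frobp (p mod d))"
  proof (induction rule: euclidean_relation_polyI)
    case by0
    then show ?case using assms by (simp add: frobp_0)
  next
    case divides
    then have "p mod d = 0" by simp
    moreover have "frobp (p div d) * d = p"
    proof -
      have "frobp (p div d) * d = frobp (p div d) * frobp d" using assms by simp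
      also have "\<dots> = frobp (p div d * d)" by (simp only: frobp_mult)
      also have "p div d * d = p" using divides by simp
      finally show ?thesis using assms by simp
    qed
    ultimately show ?case by (simp add: frobp_0)
  next
    case euclidean_relation
    then have "p mod d \<noteq> 0" by (simp add: mod_eq_0_iff_dvd)
    then have "degree (frobp (p mod d)) < degree d"
      using euclidean_relation degree_mod_less' by (simp add: degree_frobp)
    moreover have "p = frobp (p div d) * d + frobp (p mod d)"
    proof -
      have "frobp (p div d) * d + frobp (p mod d) = frobp (p div d) * frobp d + frobp (p mod d)"
        using assms by simp
      also have "\<dots> = frobp (p div d * d + p mod d)" by (simp only: frobp_mult frobp_add)
      also have "p div d * d + p mod d = p" by simp
      finally show ?thesis using assms by simp
    qed
    ultimately show ?case by simp
  qed
  then show ?thesis by simp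
qed

end


lemma vdm_zero:
  fixes y z :: "nat \<Rightarrow> 'a::field"
  assumes T: "finite T" and inj: "inj_on z T"
    and zero: "\<forall>l<card T. (\<Sum>j\<in>T. y j * z j ^ l) = 0"
  shows "\<forall>j\<in>T. y j = 0"
proof
  fix j0 assume j0: "j0 \<in> T"
  define L where "L = (\<Prod>j\<in>T-{j0}. [:- z j, 1:])"
  have degL: "degree L \<le> card T - 1"
  proof -
    have "degree L \<le> (\<Sum>j\<in>T-{j0}. degree [:- z j, 1:])"
      unfolding L_def using degree_prod_sum_le[of "T-{j0}" "\<lambda>j. [:- z j, 1:]"] T by (simp add: o_def)
    also have "\<dots> = card (T - {j0})" by simp
    finally show ?thesis using j0 T by simp
  qed
  have bnd: "\<forall>i\<ge>card T. coeff L i = 0"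
  proof (intro allI impI)
    fix i assume "card T \<le> i"
    moreover have "card T > 0" using j0 T card_gt_0_iff by blast
    ultimately have "degree L < i" using degL by linarith
    then show "coeff L i = 0" by (rule coeff_eq_0)
  qed
  have "(\<Sum>j\<in>T. y j * poly L (z j)) = (\<Sum>j\<in>T. y j * (\<Sum>l<card T. coeff L l * z j ^ l))"
    using bounded_poly[OF bnd] by simp
  also have "\<dots> = (\<Sum>l<card T. coeff L l * (\<Sum>j\<in>T. y j * z j ^ l))"
    by (simp add: sum_distrib_left sum_distrib_right mult_ac sum.swap[of _ T])
  also have "\<dots> = 0" using zero by simp
  finally have st: "(\<Sum>j\<in>T. y j * poly L (z j)) = 0" .
  have "(\<Sum>j\<in>T. y j * poly L (z j)) = y j0 * poly L (z j0)"
  proof (rule sum.remove[OF T j0, THEN trans])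
    have "\<forall>j\<in>T - {j0}. poly L (z j) = 0"
      unfolding L_def using T by (auto simp: poly_prod prod_zero_iff)
    then show "y j0 * poly L (z j0) + (\<Sum>j\<in>T - {j0}. y j * poly L (z j)) = y j0 * poly L (z j0)"
      by simp
  qed
  moreover have "poly L (z j0) \<noteq> 0"
    unfolding L_def using T inj j0 by (auto simp: poly_prod prod_zero_iff inj_on_def)
  ultimately show "y j0 = 0" using st by simp
qed

lemma bch:
  fixes x :: "nat \<Rightarrow> 'a::field" and w :: 'a
  assumes inj: "\<And>i j. i < n \<Longrightarrow> j < n \<Longrightarrow> w^i = w^j \<Longrightarrow> i = j"
    and wnz: "w \<noteq> 0"
    and zero: "\<And>l. l < K \<Longrightarrow> (\<Sum>i<n. x i * w^(i*(st+l))) = 0"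
    and nz: "\<exists>i<n. x i \<noteq> 0"
  shows "K + 1 \<le> card {i. i < n \<and> x i \<noteq> 0}"
proof (rule ccontr)
  define T where "T = {i. i < n \<and> x i \<noteq> 0}"
  assume "\<not> K + 1 \<le> card {i. i < n \<and> x i \<noteq> 0}"
  then have cT: "card T \<le> K" unfolding T_def by simp
  have T: "finite T" unfolding T_def by simp
  have "\<forall>j\<in>T. x j * w^(j*st) = 0"
  proof (rule vdm_zero[OF T])
    show "inj_on (\<lambda>j. w^j) T" using inj unfolding T_def inj_on_def by auto
    show "\<forall>l<card T. (\<Sum>j\<in>T. x j * w ^ (j * st) * (w ^ j) ^ l) = 0"
    proof (intro allI impI)
      fix l assume "l < card T"
      then have "l < K" using cT by simp
      have "(\<Sum>j\<in>T. x j * w ^ (j * st) * (w ^ j) ^ l) = (\<Sum>j\<in>T. x j * w^(j*(st+l)))"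
        by (simp add: power_add power_mult[symmetric] mult.assoc algebra_simps)
      also have "\<dots> = (\<Sum>i<n. x i * w^(i*(st+l)))"
        by (rule sum.mono_neutral_left) (auto simp: T_def)
      finally show "(\<Sum>j\<in>T. x j * w ^ (j * st) * (w ^ j) ^ l) = 0" using zero[OF \<open>l < K\<close>] by simp
    qed
  qed
  then have "\<forall>j\<in>T. x j = 0" using wnz by simp
  then show False using nz unfolding T_def by auto
qed

lemma sum_shift_mod:
  fixes n tau :: nat
  assumes "n > 0"
  shows "(\<Sum>i<n. F ((i + tau) mod n)) = (\<Sum>i<n. F i)"
proof -
  have inj: "inj_on (\<lambda>i. (i + tau) mod n) {..<n}"
  proof (rule inj_onI)
    fix i j assume "i \<in> {..<n}" "j \<in> {..<n}" "(i + tau) mod n = (j + tau) mod n"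
    then have "[i = j] (mod n)" using cong_add_rcancel_nat unfolding cong_def by blast
    then show "i = j" using \<open>i \<in> {..<n}\<close> \<open>j \<in> {..<n}\<close> by (simp add: cong_def)
  qed
  have img: "(\<lambda>i. (i + tau) mod n) ` {..<n} = {..<n}"
    by (rule endo_inj_surj) (use inj assms in auto)
  show ?thesis
    using sum.reindex[OF inj, of F] img by simp
qed

lemma nz_mod:
  fixes e :: int
  assumes "- int n < e" "e < int n" "e \<noteq> 0"
  shows "e mod int n \<noteq> 0"
proof
  assume "e mod int n = 0"
  then have "int n dvd e" by auto
  then have "\<bar>int n\<bar> \<le> \<bar>e\<bar>" using assms(3) dvd_imp_le_int by blast
  then show False using assms by linarith
qed


locale S =
  fixes q n m b dA :: nat and A B :: "'a::{field,finite} set" and C :: "'a poly set" and \<delta> :: int and \<alpha> :: 'a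
  assumes pp: "prime_power q" and cardU: "card (UNIV :: 'a set) = q ^ 2"
    and nodd: "odd n" and ndvd: "n dvd q + 1"
    and prim: "primitive_root_unity n \<alpha>"
    and mpos: "m > 0" and meven: "even m"
    and bpos: "b > 0" and bgcd: "gcd b n = 1"
    and deven: "even \<delta>" and d2: "2 \<le> \<delta>" and dle: "2 * \<delta> \<le> int n - int m + 1"
  assumes A_def: "A = {1} \<union> {ipow n \<alpha> (s * ((int n + 2 * int j - 1) div 2) * int b) | s j.
                   s \<in> {1, -1} \<and> 1 \<le> j \<and> j \<le> m div 2}"
    and B_def: "B = {ipow n \<alpha> (j * int b) | j. - ((\<delta> - 2) div 2) \<le> j \<and> j \<le> (\<delta> - 2) div 2}"
    and dA_def: "dA = min_dist n (dual_code n (cyclic_code n A))"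
    and C_def: "C = cyclic_code_q q n (set_mult A B)"
begin

definition t :: nat where "t = n div 2"
definition u :: nat where "u = m div 2"
definition h :: nat where "h = nat ((\<delta> - 2) div 2)"

lemma n_eq: "n = 2*t+1" using nodd unfolding t_def by presburger
lemma m_eq: "m = 2*u" using meven unfolding u_def by simp
lemma d_eq: "\<delta> = 2 * int h + 2"
  using deven d2 unfolding h_def by (auto elim!: evenE)
lemma hdiv: "(\<delta> - 2) div 2 = int h" using d_eq by simp
lemma u_pos: "u \<ge> 1" using mpos m_eq by simp
lemma t_big: "t \<ge> u + 2*h + 1" using dle n_eq m_eq d_eq by linarith
lemma n_pos: "n > 0" using n_eq by simp

definition P :: "int \<Rightarrow> 'a" where "P e = ipow n \<alpha> e"

lemma alpha_n: "\<alpha>^n = 1" using prim by (simp add: primitive_root_unity_def)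
lemma alpha_nz: "\<alpha> \<noteq> 0" using alpha_n n_pos by (metis power_0_left less_not_refl2 zero_neq_one)
lemma alpha_mod: "\<alpha>^k = \<alpha>^(k mod n)" using alpha_n by (rule power_mod_n)

lemma alpha_inj:
  assumes "a < n" "b' < n" "\<alpha>^a = \<alpha>^b'"
  shows "a = b'"
proof (rule ccontr)
  assume ne: "a \<noteq> b'"
  have *: "\<alpha>^(y - x) = 1" if "x < y" "y < n" "\<alpha>^x = \<alpha>^y" for x y
  proof -
    have e: "x + (y - x) = y" using that by simp
    have "\<alpha>^x * \<alpha>^(y-x) = \<alpha>^(x + (y-x))" by (simp only: power_add)
    then have "\<alpha>^x * \<alpha>^(y-x) = \<alpha>^y" by (simp only: e)
    then have "\<alpha>^x * \<alpha>^(y-x) = \<alpha>^x * 1" using that by simp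
    then show ?thesis using alpha_nz by simp
  qed
  have pr: "\<alpha>^k \<noteq> 1" if "0 < k" "k < n" for k
    using prim that unfolding primitive_root_unity_def by blast
  show False
  proof (cases "a < b'")
    case True
    then have "\<alpha>^(b'-a) = 1" using * assms by blast
    moreover have "0 < b' - a" "b' - a < n" using True assms by auto
    ultimately show ?thesis using pr by blast
  next
    case False
    then have "b' < a" using ne by simp
    then have "\<alpha>^(a-b') = 1" using * assms by metis
    moreover have "0 < a - b'" "a - b' < n" using \<open>b' < a\<close> assms by auto
    ultimately show ?thesis using pr by blast
  qed
qed

lemma nat_mod_lt: "nat (e mod int n) < n"
proof -
  have "0 \<le> e mod int n" "e mod int n < int n" using n_pos by auto
  then show ?thesis by (simp add: nat_less_iff)
qed

lemma P_nat: "P (int k) = \<alpha>^k"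
proof -
  have "nat (int k mod int n) = k mod n" by (simp flip: of_nat_mod)
  then show ?thesis unfolding P_def ipow_def using alpha_mod by simp
qed

lemma P_mod: "P e = P (e mod int n)" unfolding P_def ipow_def by simp

lemma P_cong: "e1 mod int n = e2 mod int n \<Longrightarrow> P e1 = P e2" unfolding P_def ipow_def by simp

lemma P_eq_iff: "P e1 = P e2 \<longleftrightarrow> e1 mod int n = e2 mod int n"
proof
  assume "P e1 = P e2"
  then have "\<alpha>^(nat (e1 mod int n)) = \<alpha>^(nat (e2 mod int n))" unfolding P_def ipow_def .
  moreover have "nat (e1 mod int n) < n" "nat (e2 mod int n) < n" by (rule nat_mod_lt)+
  ultimately have "nat (e1 mod int n) = nat (e2 mod int n)" using alpha_inj by blast
  moreover have "0 \<le> e1 mod int n" "0 \<le> e2 mod int n" using n_pos by auto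
  ultimately show "e1 mod int n = e2 mod int n" by (simp add: eq_nat_nat_iff)
qed (rule P_cong)

lemma P_add: "P (x + y) = P x * P y"
proof -
  define a where "a = nat (x mod int n)"
  define c where "c = nat (y mod int n)"
  have "P x * P y = \<alpha>^a * \<alpha>^c" unfolding P_def ipow_def a_def c_def by simp
  also have "\<dots> = \<alpha>^(a + c)" by (simp add: power_add)
  also have "\<dots> = P (int (a + c))" by (rule P_nat[symmetric])
  also have "\<dots> = P (x + y)"
  proof (rule P_cong)
    have "int a = x mod int n" "int c = y mod int n" unfolding a_def c_def using n_pos by auto
    then show "int (a + c) mod int n = (x + y) mod int n" by (simp add: mod_add_eq)
  qed
  finally show ?thesis by simp
qed

lemma P_0: "P 0 = 1" using P_nat[of 0] by simp

lemma P_pow: "P e ^ k = P (e * int k)"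
  by (induction k) (simp_all add: P_0 P_add algebra_simps)

lemma P_shift: "P (e + int n * k) = P e"
  by (rule P_cong) simp

lemma P_inv: "P e * P (- e) = 1" by (simp flip: P_add add: P_0)

lemma P_nz: "P e \<noteq> 0" using P_inv[of e] by auto

lemma P_root: "P e ^ n = 1"
proof -
  have "P e ^ n = P (e * int n)" by (rule P_pow)
  also have "\<dots> = P 0" by (rule P_cong) simp
  finally show ?thesis by (simp add: P_0)
qed

definition Pb :: "int \<Rightarrow> 'a" where "Pb e = P (e * int b)"

lemma Pb_add: "Pb (x + y) = Pb x * Pb y" unfolding Pb_def by (simp add: distrib_right P_add)

lemma Pb_shift: "Pb (e + int n * k) = Pb e"
  unfolding Pb_def by (metis P_shift distrib_right mult.assoc)

lemma Pb_eq_iff: "Pb e1 = Pb e2 \<longleftrightarrow> e1 mod int n = e2 mod int n"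
proof -
  have cop: "coprime (int b) (int n)" using bgcd by (simp add: coprime_iff_gcd_eq_1)
  have "Pb e1 = Pb e2 \<longleftrightarrow> [e1 * int b = e2 * int b] (mod int n)"
    unfolding Pb_def P_eq_iff cong_def ..
  also have "\<dots> \<longleftrightarrow> [e1 = e2] (mod int n)" using cong_mult_rcancel[OF cop] .
  finally show ?thesis by (simp add: cong_def)
qed

lemma Pb_0: "Pb 0 = 1" by (simp add: Pb_def P_0)
lemma Pb_nz: "Pb e \<noteq> 0" by (simp add: Pb_def P_nz)
lemma Pb_root: "Pb e ^ n = 1" by (simp add: Pb_def P_root)
lemma Pb_inv: "Pb e * Pb (- e) = 1" by (simp flip: Pb_add add: Pb_0)
lemma Pb_pow: "Pb e ^ k = Pb (e * int k)" by (simp add: Pb_def P_pow algebra_simps)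

definition \<omega> :: 'a where "\<omega> = Pb 1"

lemma omega_pow: "\<omega>^k = Pb (int k)" by (simp add: \<omega>_def Pb_pow)
lemma omega_nz: "\<omega> \<noteq> 0" by (simp add: \<omega>_def Pb_nz)
lemma omega_inj: "i < n \<Longrightarrow> j < n \<Longrightarrow> \<omega>^i = \<omega>^j \<Longrightarrow> i = j"
  by (simp add: omega_pow Pb_eq_iff flip: of_nat_mod)

lemma A_eq: "A = {1} \<union> {Pb (int t + int j) | j. 1 \<le> j \<and> j \<le> u} \<union> {Pb (- (int t + int j)) | j. 1 \<le> j \<and> j \<le> u}"
proof -
  have e: "(int n + 2 * int j - 1) div 2 = int t + int j" for j using n_eq by simp
  have gen: "{F s j | s j. s \<in> {1::int,-1} \<and> Q j} = {F 1 j | j. Q j} \<union> {F (-1) j | j. Q j}"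
    for F :: "int \<Rightarrow> nat \<Rightarrow> 'a" and Q by blast
  show ?thesis unfolding A_def e u_def[symmetric] Pb_def P_def
    by (subst gen) simp
qed

lemma memA: "x \<in> A \<longleftrightarrow> x = 1 \<or> (\<exists>j. 1 \<le> j \<and> j \<le> u \<and> (x = Pb (int t + int j) \<or> x = Pb (- (int t + int j))))"
  unfolding A_eq by blast

lemma memB: "x \<in> B \<longleftrightarrow> (\<exists>j. - int h \<le> j \<and> j \<le> int h \<and> x = Pb j)"
  unfolding B_def hdiv Pb_def P_def by auto

definition I1 :: "int set" where "I1 = {- int h .. int h}"
definition I2 :: "int set" where "I2 = {int t + 1 - int u - int h .. int t + int u + int h}"

lemma AB_eq: "set_mult A B = Pb ` (I1 \<union> I2)"
proof
  show "set_mult A B \<subseteq> Pb ` (I1 \<union> I2)"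
  proof
    fix x assume "x \<in> set_mult A B"
    then obtain a y where x: "x = a * y" and a: "a \<in> A" and y: "y \<in> B"
      unfolding set_mult_def by blast
    from y obtain j where j: "- int h \<le> j" "j \<le> int h" "y = Pb j" by (auto simp: memB)
    from a consider "a = 1" | j' where "1 \<le> j'" "j' \<le> u" "a = Pb (int t + int j')"
      | j' where "1 \<le> j'" "j' \<le> u" "a = Pb (- (int t + int j'))"
      by (auto simp: memA)
    then show "x \<in> Pb ` (I1 \<union> I2)"
    proof cases
      case 1
      then show ?thesis using x j by (auto simp: I1_def)
    next
      case (2 j')
      then have "x = Pb (int t + int j' + j)" using x j by (simp add: Pb_add)
      moreover have "int t + int j' + j \<in> I2" using 2 j unfolding I2_def by auto
      ultimately show ?thesis by blast
    next
      case (3 j')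
      then have "x = Pb (- (int t + int j') + j)" using x j by (simp add: Pb_add)
      also have "\<dots> = Pb (- (int t + int j') + j + int n * 1)" by (rule Pb_shift[symmetric])
      finally have "x = Pb (- (int t + int j') + j + int n * 1)" .
      moreover have "- (int t + int j') + j + int n * 1 \<in> I2" using 3 j n_eq unfolding I2_def by auto
      ultimately show ?thesis by blast
    qed
  qed
next
  show "Pb ` (I1 \<union> I2) \<subseteq> set_mult A B"
  proof
    fix x assume "x \<in> Pb ` (I1 \<union> I2)"
    then obtain e where x: "x = Pb e" and e: "e \<in> I1 \<union> I2" by blast
    show "x \<in> set_mult A B"
    proof (cases "e \<in> I1")
      case True
      then have "1 \<in> A" "x \<in> B" using x by (auto simp: memA memB I1_def)
      then show ?thesis unfolding set_mult_def by force
    next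
      case False
      then have e2: "e \<in> I2" using e by blast
      show ?thesis
      proof (cases "e \<ge> int t + 1")
        case True
        define e1 where "e1 = min e (int t + int u)"
        define j' where "j' = nat (e1 - int t)"
        have j': "1 \<le> j'" "j' \<le> u" "int j' = e1 - int t" using True u_pos unfolding j'_def e1_def by auto
        have a: "Pb (int t + int j') \<in> A" using j' by (auto simp: memA)
        have y: "Pb (e - e1) \<in> B" using e2 True unfolding memB
          by (intro exI[of _ "e - e1"]) (auto simp: e1_def I2_def)
        have "x = Pb (int t + int j') * Pb (e - e1)" using j' x by (simp flip: Pb_add)
        then show ?thesis using a y unfolding set_mult_def by blast
      next
        case False
        define e1 where "e1 = max e (int t + 1 - int u)"
        define j' where "j' = nat (int t + 1 - e1)"
        have j': "1 \<le> j'" "j' \<le> u" "int j' = int t + 1 - e1" using False u_pos unfolding j'_def e1_def by auto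
        have a: "Pb (- (int t + int j')) \<in> A" using j' by (auto simp: memA)
        have y: "Pb (e - e1) \<in> B" using e2 False unfolding memB
          by (intro exI[of _ "e - e1"]) (auto simp: e1_def I2_def)
        have "Pb (- (int t + int j')) = Pb (- (int t + int j') + int n * 1)" by (rule Pb_shift[symmetric])
        also have "- (int t + int j') + int n * 1 = e1" using j' n_eq by simp
        finally have "x = Pb (- (int t + int j')) * Pb (e - e1)" using x by (simp flip: Pb_add)
        then show ?thesis using a y unfolding set_mult_def by blast
      qed
    qed
  qed
qed

lemma Pb_inj_on: "inj_on Pb (I1 \<union> I2)"
proof (rule inj_onI)
  fix x y assume x: "x \<in> I1 \<union> I2" and y: "y \<in> I1 \<union> I2" and "Pb x = Pb y"
  then have "x mod int n = y mod int n" by (simp add: Pb_eq_iff)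
  then have "(x + int h) mod int n = (y + int h) mod int n" by (metis mod_add_left_eq)
  moreover have "0 \<le> x + int h" "x + int h < int n" "0 \<le> y + int h" "y + int h < int n"
    using x y t_big n_eq unfolding I1_def I2_def by auto
  ultimately show "x = y" by simp
qed

lemma card_AB: "card (set_mult A B) = 2*u + 4*h + 1"
proof -
  have "card (set_mult A B) = card (I1 \<union> I2)" unfolding AB_eq using Pb_inj_on by (rule card_image)
  also have "\<dots> = card I1 + card I2"
    by (rule card_Un_disjoint) (use t_big in \<open>auto simp: I1_def I2_def\<close>)
  also have "\<dots> = 2*u + 4*h + 1" unfolding I1_def I2_def using t_big by simp
  finally show ?thesis .
qed

lemma AB_root: "\<beta> \<in> set_mult A B \<Longrightarrow> \<beta>^n = 1"
  unfolding AB_eq by (auto simp: Pb_root)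

lemma finite_AB: "finite (set_mult A B)" by simp

lemma AB_inv: "\<beta> \<in> set_mult A B \<Longrightarrow> inverse \<beta> \<in> set_mult A B"
proof -
  assume "\<beta> \<in> set_mult A B"
  then obtain e where e: "e \<in> I1 \<union> I2" "\<beta> = Pb e" unfolding AB_eq by blast
  have inv: "inverse \<beta> = Pb (- e)" using Pb_inv[of e] e by (simp add: field_simps Pb_nz)
  show ?thesis
  proof (cases "e \<in> I1")
    case True
    then have "- e \<in> I1" by (auto simp: I1_def)
    then show ?thesis using inv unfolding AB_eq by blast
  next
    case False
    then have "e \<in> I2" using e by blast
    then have "- e + int n * 1 \<in> I2" using n_eq unfolding I2_def by auto
    moreover have "inverse \<beta> = Pb (- e + int n * 1)" using inv Pb_shift[of "-e" 1] by metis
    ultimately show ?thesis unfolding AB_eq by blast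
  qed
qed

lemma A_root: "\<beta> \<in> A \<Longrightarrow> \<beta>^n = 1"
  by (auto simp: memA Pb_root)

lemma finite_A: "finite A" by simp

end


context fq
begin
lemma frobp_lin: "frobp [:a, c:] = [:a^q, c^q:]"
  by (simp add: poly_eq_iff coeff_frobp coeff_pCons frob_0 split: nat.split)

lemma frobp_monom1: "frobp (monom 1 k) = monom 1 k"
  by (simp add: poly_eq_iff coeff_frobp coeff_monom frob_0)
end

lemma (in S) fq_ok: "fq TYPE('a) q"
proof
  obtain p k where p: "prime p" "k > 0" "q = p^k" using pp unfolding prime_power_def by blast
  have "card (UNIV :: 'a set) = p^(k*2)" using cardU p by (simp add: power_mult)
  then have ch: "CHAR('a) = p" using CHAR_eq_p[OF p(1)] by blast
  show "(x + y)^q = x^q + y^q" for x y :: 'a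
    by (rule freshmans_dream'[where n=k]) (simp_all add: ch p)
  show "card (UNIV :: 'a set) = q^2" by (rule cardU)
  have "p \<ge> 2" using p(1) by (simp add: prime_ge_2_nat)
  moreover have "p \<le> p^k" using p self_le_power[of p k] prime_gt_0_nat[OF p(1)] by simp
  ultimately show "q \<ge> 2" using p by simp
qed

sublocale S \<subseteq> F: fq q "TYPE('a)" by (rule fq_ok)

context S
begin

definition g :: "'a poly" where "g = gen_poly (set_mult A B)"
definition X :: "'a poly" where "X = xn_minus_1 n"
definition N :: nat where "N = 2*u + 4*h + 1"
definition kd :: nat where "kd = n - N"

lemma kd_eq: "kd = 2*t - 2*u - 4*h" unfolding kd_def N_def using n_eq by arith
lemma n_N: "n = N + kd" unfolding kd_def N_def using n_eq t_big by arith

lemma poly_g: "poly g x = (\<Prod>\<beta>\<in>set_mult A B. x - \<beta>)"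
  unfolding g_def gen_poly_def by (simp add: poly_prod)

lemma g_root: "\<beta> \<in> set_mult A B \<Longrightarrow> poly g \<beta> = 0"
  unfolding poly_g using finite_AB by (auto simp: prod_zero_iff)

lemma deg_g: "degree g = N"
proof -
  have "degree g = (\<Sum>\<beta>\<in>set_mult A B. degree [:- \<beta>, 1:])"
    unfolding g_def gen_poly_def
    using degree_prod_eq_sum_degree[of "set_mult A B" "\<lambda>\<beta>. [:- \<beta>, 1:]"] by simp
  also have "\<dots> = N" using card_AB by (simp add: N_def)
  finally show ?thesis .
qed

lemma g_nz: "g \<noteq> 0"
  unfolding g_def gen_poly_def using finite_AB by (auto simp: prod_zero_iff)

lemma AB_frob: "\<beta> \<in> set_mult A B \<Longrightarrow> \<beta>^q = inverse \<beta>"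
proof -
  assume b: "\<beta> \<in> set_mult A B"
  obtain c where c: "q + 1 = n * c" using ndvd by blast
  have "\<beta>^(q+1) = 1" using AB_root[OF b] c by (simp add: power_mult)
  then have "\<beta>^q * \<beta> = 1" by (simp add: mult.commute)
  then show ?thesis by (metis inverse_unique mult.commute)
qed

lemma frobp_g: "F.frobp g = g"
proof -
  have "F.frobp g = (\<Prod>\<beta>\<in>set_mult A B. F.frobp [:- \<beta>, 1:])"
    unfolding g_def gen_poly_def by (rule F.frobp_prod)
  also have "\<dots> = (\<Prod>\<beta>\<in>set_mult A B. [:- inverse \<beta>, 1:])"
    by (rule prod.cong) (auto simp: F.frobp_lin F.frob_minus AB_frob)
  also have "\<dots> = (\<Prod>\<beta>\<in>inverse ` set_mult A B. [:- \<beta>, 1:])"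
    by (subst prod.reindex) (auto simp: inj_on_def)
  also have "inverse ` set_mult A B = set_mult A B"
  proof
    show "inverse ` set_mult A B \<subseteq> set_mult A B" using AB_inv by blast
    show "set_mult A B \<subseteq> inverse ` set_mult A B"
    proof
      fix \<beta> assume "\<beta> \<in> set_mult A B"
      then have "inverse \<beta> \<in> set_mult A B" by (rule AB_inv)
      then show "\<beta> \<in> inverse ` set_mult A B" by (metis image_eqI inverse_inverse_eq)
    qed
  qed
  finally show ?thesis unfolding g_def gen_poly_def .
qed

lemma poly_X: "poly X x = x^n - 1" by (simp add: X_def xn_minus_1_def poly_monom)

lemma coeff_X: "coeff X i = (if i = n then 1 else 0) - (if i = 0 then 1 else 0)"
  by (simp add: X_def xn_minus_1_def coeff_monom coeff_1)

lemma deg_X: "degree X = n"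
proof (rule antisym)
  show "degree X \<le> n" by (rule degree_le) (auto simp: coeff_X)
  show "n \<le> degree X" by (rule le_degree) (use n_pos in \<open>simp add: coeff_X\<close>)
qed

lemma X_nz: "X \<noteq> 0" using deg_X n_pos by auto

lemma frobp_X: "F.frobp X = X"
  by (simp add: X_def xn_minus_1_def F.frobp_diff F.frobp_monom1 F.frobp_1)

lemma g_dvd_X: "g dvd X"
  unfolding g_def gen_poly_def
  using prod_dvd[OF finite_AB, of X] by (auto simp: poly_X AB_root)

definition hh :: "'a poly" where "hh = X div g"

lemma X_eq: "X = g * hh" unfolding hh_def using g_dvd_X by simp
lemma hh_nz: "hh \<noteq> 0" using X_eq X_nz by auto
lemma deg_hh: "degree hh = kd"
proof -
  have "degree (g*hh) = degree g + degree hh" using g_nz hh_nz by (rule degree_mult_eq)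
  then show ?thesis using X_eq deg_X deg_g n_N by simp
qed
lemma frobp_hh: "F.frobp hh = hh"
  unfolding hh_def using F.frobp_divmod[OF frobp_X frobp_g] by simp

definition R :: "'a poly set" where "R = {r. F.frobp r = r \<and> (\<forall>i\<ge>kd. coeff r i = 0)}"

lemma R_deg:
  assumes "r \<in> R" "r \<noteq> 0" shows "degree r < kd"
proof (rule ccontr)
  assume "\<not> degree r < kd"
  then have "coeff r (degree r) = 0" using assms(1) unfolding R_def by auto
  then show False using assms(2) by simp
qed

lemma frob_K: "(\<forall>i. coeff f i \<in> subfield_q q) \<longleftrightarrow> F.frobp f = f"
  by (simp add: F.frobp_id_iff F.K_def)

lemma C_eq: "C = (\<lambda>r. g * r) ` R"
proof -
  have C': "C = {(f * g) mod X | f. F.frobp f = f}"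
    unfolding C_def cyclic_code_q_def g_def[symmetric] X_def[symmetric] frob_K ..
  show ?thesis
  proof
    show "C \<subseteq> (\<lambda>r. g * r) ` R"
    proof
      fix c assume "c \<in> C"
      then obtain f where f: "F.frobp f = f" "c = (f * g) mod X" using C' by blast
      have "c = g * (f mod hh)" unfolding f(2) X_eq by (simp add: mult.commute mod_mult_mult1)
      moreover have "f mod hh \<in> R"
      proof -
        have "F.frobp (f mod hh) = f mod hh" using F.frobp_divmod[OF f(1) frobp_hh] by simp
        moreover have "\<forall>i\<ge>kd. coeff (f mod hh) i = 0"
          using degree_mod_less[OF hh_nz, of f] deg_hh by (auto intro: coeff_eq_0)
        ultimately show ?thesis unfolding R_def by simp
      qed
      ultimately show "c \<in> (\<lambda>r. g * r) ` R" by blast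
    qed
  next
    show "(\<lambda>r. g * r) ` R \<subseteq> C"
    proof
      fix c assume "c \<in> (\<lambda>r. g * r) ` R"
      then obtain r where r: "r \<in> R" "c = g * r" by blast
      have "r mod hh = r"
      proof (cases "r = 0")
        case False
        then show ?thesis using R_deg[OF r(1)] deg_hh by (simp add: mod_poly_less)
      qed simp
      then have "c = (r * g) mod X" unfolding r(2) X_eq by (simp add: mult.commute mod_mult_mult1)
      moreover have "F.frobp r = r" using r(1) R_def by simp
      ultimately show "c \<in> C" unfolding C' by blast
    qed
  qed
qed

lemma card_R: "card R = q^kd"
proof -
  define \<phi> where "\<phi> r = restrict (coeff r) {..<kd}" for r :: "'a poly"
  have inj: "inj_on \<phi> R"
  proof (rule inj_onI)
    fix r1 r2 assume r: "r1 \<in> R" "r2 \<in> R" "\<phi> r1 = \<phi> r2"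
    show "r1 = r2"
    proof (rule poly_eqI)
      fix i
      show "coeff r1 i = coeff r2 i"
      proof (cases "i < kd")
        case True
        then show ?thesis using fun_cong[OF r(3), of i] by (simp add: \<phi>_def)
      next
        case False
        then show ?thesis using r(1,2) by (simp add: R_def)
      qed
    qed
  qed
  have img: "\<phi> ` R = PiE {..<kd} (\<lambda>_. F.K)"
  proof
    show "\<phi> ` R \<subseteq> PiE {..<kd} (\<lambda>_. F.K)"
    proof
      fix G assume "G \<in> \<phi> ` R"
      then obtain r where r: "r \<in> R" "G = \<phi> r" by blast
      then have "F.frobp r = r" unfolding R_def by simp
      then have "\<forall>i. coeff r i \<in> F.K" by (simp add: F.frobp_id_iff)
      then show "G \<in> PiE {..<kd} (\<lambda>_. F.K)" unfolding r(2) \<phi>_def by (simp add: restrict_PiE_iff)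
    qed
  next
    show "PiE {..<kd} (\<lambda>_. F.K) \<subseteq> \<phi> ` R"
    proof
      fix G assume G: "G \<in> PiE {..<kd} (\<lambda>_. F.K)"
      define r where "r = vec kd G"
      have cr: "coeff r i = (if i < kd then G i else 0)" for i by (simp add: r_def coeff_vec)
      have "\<forall>i. coeff r i \<in> F.K"
      proof
        fix i show "coeff r i \<in> F.K"
        proof (cases "i < kd")
          case True
          then show ?thesis using PiE_mem[OF G, of i] by (simp add: cr)
        next
          case False
          then show ?thesis by (simp add: cr F.K_iff F.frob_0)
        qed
      qed
      then have "F.frobp r = r" by (simp add: F.frobp_id_iff)
      then have "r \<in> R" unfolding R_def by (simp add: cr)
      moreover have "\<phi> r = G"
      proof
        fix i show "\<phi> r i = G i"
        proof (cases "i < kd")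
          case True
          then show ?thesis by (simp add: \<phi>_def cr)
        next
          case False
          then have "G i = undefined" using PiE_arb[OF G, of i] by simp
          then show ?thesis using False by (simp add: \<phi>_def)
        qed
      qed
      ultimately show "G \<in> \<phi> ` R" by blast
    qed
  qed
  have "card R = card (\<phi> ` R)" using inj by (simp add: card_image)
  also have "\<dots> = q^kd" unfolding img by (simp add: card_PiE F.card_K)
  finally show ?thesis .
qed

lemma card_C: "card C = q^kd"
proof -
  have "inj_on (\<lambda>r. g * r) R" using g_nz by (auto simp: inj_on_def)
  then show ?thesis unfolding C_eq using card_R by (simp add: card_image)
qed

lemma finite_C: "finite C"
  using card_C F.q_pos by (metis card_ge_0_finite nat_zero_less_power_iff)

lemma code_dim_C: "code_dim q C = kd"
  unfolding code_dim_def card_C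
proof (rule the_equality)
  show "\<And>k. q ^ kd = q ^ k \<Longrightarrow> k = kd" using F.q2 by simp
qed simp

lemma C_mem:
  assumes "c \<in> C"
  shows "F.frobp c = c" "\<forall>i\<ge>n. coeff c i = 0" "\<forall>\<beta>\<in>set_mult A B. poly c \<beta> = 0"
proof -
  obtain r where r: "r \<in> R" "c = g * r" using assms C_eq by blast
  show "F.frobp c = c" using r frobp_g by (simp add: F.frobp_mult R_def)
  show "\<forall>i\<ge>n. coeff c i = 0"
  proof (cases "r = 0")
    case False
    then have "degree c = N + degree r" using r g_nz by (simp add: degree_mult_eq deg_g)
    then have "degree c < n" using R_deg[OF r(1) False] n_N by simp
    then show ?thesis by (auto intro: coeff_eq_0)
  qed (use r in simp)
  show "\<forall>\<beta>\<in>set_mult A B. poly c \<beta> = 0" using r g_root by simp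
qed

lemma C_diff: "c1 \<in> C \<Longrightarrow> c2 \<in> C \<Longrightarrow> c1 - c2 \<in> C"
proof -
  assume "c1 \<in> C" "c2 \<in> C"
  then obtain r1 r2 where "r1 \<in> R" "c1 = g * r1" "r2 \<in> R" "c2 = g * r2" using C_eq by blast
  moreover have "r1 - r2 \<in> R" using \<open>r1 \<in> R\<close> \<open>r2 \<in> R\<close> by (simp add: R_def F.frobp_diff)
  ultimately show "c1 - c2 \<in> C" unfolding C_eq by (metis image_eqI right_diff_distrib)
qed

end


lemma inj_shift_mod:
  fixes n tau :: nat
  shows "inj_on (\<lambda>i. (i + tau) mod n) {..<n}"
proof (rule inj_onI)
  fix i j assume "i \<in> {..<n}" "j \<in> {..<n}" "(i + tau) mod n = (j + tau) mod n"
  then have "[i = j] (mod n)" using cong_add_rcancel_nat unfolding cong_def by blast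
  then show "i = j" using \<open>i \<in> {..<n}\<close> \<open>j \<in> {..<n}\<close> by (simp add: cong_def)
qed

context S
begin

definition D :: "'a poly set" where "D = dual_code n (cyclic_code n A)"

lemma gA_root: "\<beta> \<in> A \<Longrightarrow> poly (gen_poly A) \<beta> = 0"
  unfolding gen_poly_def using finite_A by (auto simp: poly_prod prod_zero_iff)

lemma cycA_mem:
  assumes "c \<in> cyclic_code n A"
  shows "\<forall>i\<ge>n. coeff c i = 0" "\<forall>\<beta>\<in>A. poly c \<beta> = 0"
proof -
  obtain f where f: "c = (f * gen_poly A) mod X" using assms unfolding cyclic_code_def X_def by blast
  have "c = 0 \<or> degree c < n" using degree_mod_less[OF X_nz, of "f * gen_poly A"] f deg_X by simp
  then show "\<forall>i\<ge>n. coeff c i = 0" by (auto intro: coeff_eq_0)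
  show "\<forall>\<beta>\<in>A. poly c \<beta> = 0"
  proof
    fix \<beta> assume b: "\<beta> \<in> A"
    have e: "(f * gen_poly A) div X * X + c = f * gen_poly A" unfolding f by (rule div_mult_mod_eq)
    have "poly ((f * gen_poly A) div X * X + c) \<beta> = poly (f * gen_poly A) \<beta>" by (simp only: e)
    then show "poly c \<beta> = 0" using gA_root[OF b] A_root[OF b] by (simp add: poly_X)
  qed
qed

lemma cycA_intro:
  assumes "\<forall>i\<ge>n. coeff w i = 0" "\<forall>\<beta>\<in>A. poly w \<beta> = 0"
  shows "w \<in> cyclic_code n A"
proof -
  have "gen_poly A dvd w" unfolding gen_poly_def using prod_dvd[OF finite_A assms(2)] .
  then obtain f where f: "w = gen_poly A * f" by (elim dvdE)
  have "w mod X = w"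
  proof (cases "w = 0")
    case False
    then have "coeff w (degree w) \<noteq> 0" by simp
    then have "degree w < n" using assms(1) by (meson not_le)
    then show ?thesis using deg_X by (simp add: mod_poly_less)
  qed simp
  then have "w = (f * gen_poly A) mod xn_minus_1 n" using f by (simp add: X_def mult.commute)
  then show ?thesis unfolding cyclic_code_def by blast
qed

lemma D_orth: "v \<in> D \<Longrightarrow> c \<in> cyclic_code n A \<Longrightarrow> (\<Sum>i<n. coeff v i * coeff c i) = 0"
  unfolding D_def dual_code_def by blast

lemma D_bounded: "v \<in> D \<Longrightarrow> \<forall>i\<ge>n. coeff v i = 0"
  unfolding D_def dual_code_def by (auto intro: coeff_eq_0)

lemma nz_ex:
  assumes "\<forall>i\<ge>n. coeff v i = 0" "v \<noteq> 0"
  shows "\<exists>i<n. coeff v i \<noteq> 0"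
proof (rule ccontr)
  assume "\<not> (\<exists>i<n. coeff v i \<noteq> 0)"
  then have "\<forall>i. coeff v i = 0" using assms(1) by (meson not_le)
  then have "v = 0" by (simp add: poly_eq_iff)
  then show False using assms(2) by simp
qed

definition ones :: "'a poly" where "ones = vec n (\<lambda>_. 1)"

lemma ones_D: "ones \<in> D" "ones \<noteq> 0"
proof -
  have "degree ones \<le> n - 1" by (rule degree_le) (auto simp: ones_def coeff_vec)
  then have "degree ones < n" using n_pos by simp
  moreover have "(\<Sum>i<n. coeff ones i * coeff c i) = 0" if "c \<in> cyclic_code n A" for c
  proof -
    have "(\<Sum>i<n. coeff ones i * coeff c i) = (\<Sum>i<n. coeff c i * 1^i)" by (simp add: ones_def coeff_vec)
    also have "\<dots> = poly c 1" using cycA_mem(1)[OF that] by (simp add: bounded_poly)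
    also have "\<dots> = 0" using cycA_mem(2)[OF that] by (simp add: memA)
    finally show ?thesis .
  qed
  ultimately show "ones \<in> D" unfolding D_def dual_code_def by blast
  have "coeff ones 0 = 1" using n_pos by (simp add: ones_def coeff_vec)
  then show "ones \<noteq> 0" by auto
qed

lemma Pb_eq_1: "Pb e = 1 \<longleftrightarrow> e mod int n = 0"
  using Pb_eq_iff[of e 0] by (simp add: Pb_0)

lemma D_weight:
  assumes v: "v \<in> D" "v \<noteq> 0"
  shows "t - u + 1 \<le> weight n v"
proof -
  have "t - u + 1 \<le> card {i. i < n \<and> coeff v i \<noteq> 0}"
  proof (rule bch[where w = \<omega> and st = 1])
    show "\<And>i j. i < n \<Longrightarrow> j < n \<Longrightarrow> \<omega> ^ i = \<omega> ^ j \<Longrightarrow> i = j" by (rule omega_inj)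
    show "\<omega> \<noteq> 0" by (rule omega_nz)
    show "\<exists>i<n. coeff v i \<noteq> 0" using nz_ex[OF D_bounded[OF v(1)] v(2)] .
    fix l assume l: "l < t - u"
    define \<gamma> where "\<gamma> = \<omega>^(1+l)"
    have g: "\<gamma> = Pb (int (1 + l))" unfolding \<gamma>_def by (rule omega_pow)
    define e where "e = vec n (\<lambda>i. \<gamma>^i)"
    have "e \<in> cyclic_code n A"
    proof (rule cycA_intro)
      show "\<forall>i\<ge>n. coeff e i = 0" by (simp add: e_def coeff_vec)
      show "\<forall>\<beta>\<in>A. poly e \<beta> = 0"
      proof
        fix \<beta> assume b: "\<beta> \<in> A"
        define z where "z = \<gamma> * \<beta>"
        have zn: "z^n = 1" unfolding z_def using A_root[OF b] g by (simp add: power_mult_distrib Pb_root)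
        have z1: "z \<noteq> 1"
        proof
          assume z: "z = 1"
          from b consider "\<beta> = 1" | j where "1 \<le> j" "j \<le> u" "\<beta> = Pb (int t + int j)"
            | j where "1 \<le> j" "j \<le> u" "\<beta> = Pb (- (int t + int j))"
            by (auto simp: memA)
          then show False
          proof cases
            case 1
            then have "Pb (int (1+l)) = 1" using z g z_def by simp
            then have "int (1+l) mod int n = 0" by (simp add: Pb_eq_1)
            moreover have "int (1+l) mod int n \<noteq> 0" using l n_eq by (intro nz_mod) auto
            ultimately show False by simp
          next
            case (2 j)
            then have "Pb (int (1+l) + (int t + int j)) = 1" using z g z_def by (simp add: Pb_add)
            then have "(int (1+l) + (int t + int j)) mod int n = 0" by (simp add: Pb_eq_1)
            moreover have "(int (1+l) + (int t + int j)) mod int n \<noteq> 0" using l n_eq 2 by (intro nz_mod) auto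
            ultimately show False by simp
          next
            case (3 j)
            then have "Pb (int (1+l) + - (int t + int j)) = 1" using z g z_def by (simp add: Pb_add)
            then have "(int (1+l) + - (int t + int j)) mod int n = 0" by (simp add: Pb_eq_1)
            moreover have "(int (1+l) + - (int t + int j)) mod int n \<noteq> 0" using l n_eq 3 by (intro nz_mod) auto
            ultimately show False by simp
          qed
        qed
        have "poly e \<beta> = (\<Sum>i<n. z^i)" by (simp add: e_def poly_vec z_def power_mult_distrib)
        also have "\<dots> = 0" using z1 zn by (simp add: sum_gp_strict)
        finally show "poly e \<beta> = 0" .
      qed
    qed
    then have "(\<Sum>i<n. coeff v i * coeff e i) = 0" by (rule D_orth[OF v(1)])
    moreover have "coeff e i = \<omega>^(i*(1+l))" if "i < n" for i
    proof -
      have "coeff e i = \<gamma>^i" using that by (simp add: e_def coeff_vec)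
      also have "\<gamma>^i = \<omega>^((1+l)*i)" unfolding \<gamma>_def by (rule power_mult[symmetric])
      also have "(1+l)*i = i*(1+l)" by (rule mult.commute)
      finally show ?thesis .
    qed
    ultimately show "(\<Sum>i<n. coeff v i * \<omega>^(i*(1+l))) = 0" by simp
  qed
  then show ?thesis unfolding weight_def by simp
qed

definition WD :: "nat set" where "WD = {weight n c | c. c \<in> D \<and> c \<noteq> 0}"

lemma weight_le: "weight n c \<le> n"
proof -
  have "{i. i < n \<and> coeff c i \<noteq> 0} \<subseteq> {..<n}" by auto
  then have "card {i. i < n \<and> coeff c i \<noteq> 0} \<le> card {..<n}" by (intro card_mono) auto
  then show ?thesis unfolding weight_def by simp
qed

lemma WD_fin: "finite WD"
proof -
  have "WD \<subseteq> {..n}" unfolding WD_def using weight_le by auto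
  then show ?thesis by (rule finite_subset) simp
qed

lemma WD_ne: "WD \<noteq> {}" unfolding WD_def using ones_D by blast

lemma dA_min: "dA = Min WD" unfolding dA_def min_dist_def WD_def D_def ..

lemma v0_ex: "\<exists>v0. v0 \<in> D \<and> v0 \<noteq> 0 \<and> weight n v0 = dA"
proof -
  have "dA \<in> WD" unfolding dA_min using WD_fin WD_ne by (rule Min_in)
  then show ?thesis unfolding WD_def by auto
qed

lemma dA_ge: "t - u + 1 \<le> dA"
proof -
  have "\<forall>w\<in>WD. t - u + 1 \<le> w" unfolding WD_def using D_weight by auto
  then show ?thesis unfolding dA_min using WD_fin WD_ne by simp
qed

end


context S
begin

lemma h_lt_n: "h < n" using t_big n_eq by simp

lemma A_nz: "\<beta> \<in> A \<Longrightarrow> \<beta> \<noteq> 0"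
proof
  assume "\<beta> \<in> A" "\<beta> = 0"
  then have "(0::'a)^n = 1" using A_root by blast
  then show False using zero_power[OF n_pos, where 'a='a] by simp
qed

lemma loc:
  assumes c: "c \<in> C" and v: "v \<in> D"
    and nz: "\<exists>i<n. coeff v i * coeff c ((i + tau) mod n) \<noteq> 0"
  shows "2*h + 2 \<le> card {i. i < n \<and> coeff v i * coeff c ((i + tau) mod n) \<noteq> 0}"
proof -
  have "2*h + 1 + 1 \<le> card {i. i < n \<and> coeff v i * coeff c ((i + tau) mod n) \<noteq> 0}"
  proof (rule bch[where w = \<omega> and st = "n - h" and x = "\<lambda>i. coeff v i * coeff c ((i + tau) mod n)"])
    show "\<And>i j. i < n \<Longrightarrow> j < n \<Longrightarrow> \<omega> ^ i = \<omega> ^ j \<Longrightarrow> i = j" by (rule omega_inj)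
    show "\<omega> \<noteq> 0" by (rule omega_nz)
    show "\<exists>i<n. coeff v i * coeff c ((i + tau) mod n) \<noteq> 0" by (rule nz)
    fix l assume l: "l < 2*h + 1"
    define \<gamma> where "\<gamma> = Pb (int l - int h)"
    have gB: "\<gamma> \<in> B" unfolding memB \<gamma>_def using l by (intro exI[of _ "int l - int h"]) auto
    have gn: "\<gamma>^n = 1" by (simp add: \<gamma>_def Pb_root)
    have gnz: "\<gamma> \<noteq> 0" by (simp add: \<gamma>_def Pb_nz)
    define \<iota> where "\<iota> i = (i + tau) mod n" for i
    define w' where "w' = vec n (\<lambda>i. coeff c (\<iota> i) * \<gamma>^(\<iota> i))"
    have cb: "\<forall>i\<ge>n. coeff c i = 0" using C_mem(2)[OF c] .
    have w'A: "w' \<in> cyclic_code n A"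
    proof (rule cycA_intro)
      show "\<forall>i\<ge>n. coeff w' i = 0" by (simp add: w'_def coeff_vec)
      show "\<forall>\<beta>\<in>A. poly w' \<beta> = 0"
      proof
        fix \<beta> assume b: "\<beta> \<in> A"
        have bn: "\<beta>^n = 1" by (rule A_root[OF b])
        have bnz: "\<beta> \<noteq> 0" by (rule A_nz[OF b])
        have bg: "\<beta> * \<gamma> \<in> set_mult A B" unfolding set_mult_def using b gB by blast
        have "\<beta>^tau * poly w' \<beta> = (\<Sum>i<n. coeff c (\<iota> i) * \<gamma>^(\<iota> i) * (\<beta>^i * \<beta>^tau))"
          by (simp add: w'_def poly_vec sum_distrib_left mult_ac)
        also have "\<dots> = (\<Sum>i<n. coeff c (\<iota> i) * \<gamma>^(\<iota> i) * \<beta>^(\<iota> i))"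
        proof (rule sum.cong[OF refl])
          fix i
          have "\<beta>^i * \<beta>^tau = \<beta>^(i+tau)" by (simp add: power_add)
          also have "\<dots> = \<beta>^(\<iota> i)" unfolding \<iota>_def using bn by (rule power_mod_n)
          finally show "coeff c (\<iota> i) * \<gamma>^(\<iota> i) * (\<beta>^i * \<beta>^tau) = coeff c (\<iota> i) * \<gamma>^(\<iota> i) * \<beta>^(\<iota> i)"
            by simp
        qed
        also have "\<dots> = (\<Sum>i<n. (\<lambda>j. coeff c j * (\<beta>*\<gamma>)^j) (\<iota> i))"
          by (simp add: power_mult_distrib mult_ac)
        also have "\<dots> = (\<Sum>j<n. coeff c j * (\<beta>*\<gamma>)^j)"
          unfolding \<iota>_def by (rule sum_shift_mod[OF n_pos])
        also have "\<dots> = poly c (\<beta>*\<gamma>)" using cb by (simp add: bounded_poly)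
        also have "\<dots> = 0" using C_mem(3)[OF c] bg by blast
        finally have "\<beta>^tau * poly w' \<beta> = 0" .
        then show "poly w' \<beta> = 0" using bnz by simp
      qed
    qed
    have s1: "(\<Sum>i<n. coeff v i * coeff w' i) = 0" by (rule D_orth[OF v w'A])
    have s2: "(\<Sum>i<n. coeff v i * coeff w' i)
          = \<gamma>^tau * (\<Sum>i<n. (coeff v i * coeff c ((i + tau) mod n)) * \<gamma>^i)"
    proof -
      have "(\<Sum>i<n. coeff v i * coeff w' i) = (\<Sum>i<n. \<gamma>^tau * ((coeff v i * coeff c ((i + tau) mod n)) * \<gamma>^i))"
      proof (rule sum.cong[OF refl])
        fix i assume "i \<in> {..<n}"
        then have cw: "coeff w' i = coeff c (\<iota> i) * \<gamma>^(\<iota> i)" by (simp add: w'_def coeff_vec)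
        have "\<gamma>^(\<iota> i) = \<gamma>^(i + tau)" unfolding \<iota>_def using gn by (rule power_mod_n[symmetric])
        then have "\<gamma>^(\<iota> i) = \<gamma>^tau * \<gamma>^i" by (simp add: power_add mult.commute)
        then show "coeff v i * coeff w' i = \<gamma>^tau * ((coeff v i * coeff c ((i + tau) mod n)) * \<gamma>^i)"
          using cw by (simp add: \<iota>_def mult_ac)
      qed
      also have "\<dots> = \<gamma>^tau * (\<Sum>i<n. (coeff v i * coeff c ((i + tau) mod n)) * \<gamma>^i)"
        by (simp add: sum_distrib_left)
      finally show ?thesis .
    qed
    have s3: "(\<Sum>i<n. (coeff v i * coeff c ((i + tau) mod n)) * \<gamma>^i) = 0"
      using s1 s2 gnz by simp
    have gi: "\<gamma>^i = \<omega>^(i*(n - h + l))" for i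
    proof -
      have "\<omega>^(i*(n - h + l)) = Pb (int (i*(n - h + l)))" by (rule omega_pow)
      also have "int (i*(n - h + l)) = (int l - int h) * int i + int n * int i"
      proof -
        define a where "a = i*(n - h + l)"
        have e1: "n - h + l + h = n + l" using h_lt_n by simp
        have "a + i*h = i*(n - h + l + h)" unfolding a_def by (simp only: add_mult_distrib2)
        then have "a + i*h = i*(n+l)" by (simp only: e1)
        then have "int (a + i*h) = int (i*(n+l))" by simp
        then have "int a + int i * int h = int i * int n + int i * int l" by (simp add: algebra_simps)
        then show ?thesis unfolding a_def[symmetric] by (simp add: algebra_simps)
      qed
      also have "Pb ((int l - int h) * int i + int n * int i) = Pb ((int l - int h) * int i)"
        by (rule Pb_shift)
      also have "\<dots> = \<gamma>^i" unfolding \<gamma>_def by (rule Pb_pow[symmetric])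
      finally show ?thesis by simp
    qed
    show "(\<Sum>i<n. (coeff v i * coeff c ((i + tau) mod n)) * \<omega>^(i*(n - h + l))) = 0"
      using s3 by (simp add: gi)
  qed
  then show ?thesis by simp
qed

lemma LRC: "is_LRC n C (int dA - \<delta> + 1) \<delta>"
  unfolding is_LRC_def
proof (intro conjI allI impI)
  have "2*h + 2 \<le> dA" using dA_ge t_big by simp
  then show "1 \<le> int dA - \<delta> + 1" using d_eq by simp
  show "2 \<le> \<delta>" by (rule d2)
  fix i0 assume i0: "i0 < n"
  obtain v0 where v0: "v0 \<in> D" "v0 \<noteq> 0" "weight n v0 = dA" using v0_ex by blast
  obtain j0 where j0: "j0 < n" "coeff v0 j0 \<noteq> 0" using nz_ex[OF D_bounded[OF v0(1)] v0(2)] by blast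
  define tau where "tau = i0 + n - j0"
  define \<iota> where "\<iota> i = (i + tau) mod n" for i
  define Sv where "Sv = {i. i < n \<and> coeff v0 i \<noteq> 0}"
  define S where "S = \<iota> ` Sv"
  have inj: "inj_on \<iota> Sv"
    using inj_shift_mod[of tau n] unfolding \<iota>_def Sv_def by (rule inj_on_subset) auto
  show "has_locality n C (int dA - \<delta> + 1) \<delta> i0"
    unfolding has_locality_def
  proof (intro exI[of _ S] conjI ballI impI)
    show "S \<subseteq> {..<n}" unfolding S_def \<iota>_def using n_pos by auto
    have "j0 + tau = i0 + n" using j0 by (simp add: tau_def)
    then have "\<iota> j0 = i0" using i0 by (simp add: \<iota>_def)
    moreover have "j0 \<in> Sv" using j0 by (simp add: Sv_def)
    ultimately show "i0 \<in> S" unfolding S_def by blast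
    have "card S = card Sv" unfolding S_def using inj by (rule card_image)
    also have "\<dots> = dA" using v0(3) by (simp add: Sv_def weight_def)
    finally show "int (card S) \<le> int dA - \<delta> + 1 + \<delta> - 1" by simp
    fix c assume c: "c \<in> C" and ex: "\<exists>j\<in>S. coeff c j \<noteq> 0"
    define Tx where "Tx = {i. i < n \<and> coeff v0 i * coeff c (\<iota> i) \<noteq> 0}"
    have TxS: "Tx \<subseteq> Sv" unfolding Tx_def Sv_def by auto
    have eqS: "{j \<in> S. coeff c j \<noteq> 0} = \<iota> ` Tx" unfolding S_def Sv_def Tx_def by auto
    have ceq: "card {j \<in> S. coeff c j \<noteq> 0} = card Tx"
      unfolding eqS using inj_on_subset[OF inj TxS] by (rule card_image)
    have "\<exists>i<n. coeff v0 i * coeff c ((i + tau) mod n) \<noteq> 0"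
      using ex unfolding S_def Sv_def \<iota>_def by auto
    then have "2*h + 2 \<le> card Tx" using loc[OF c v0(1)] unfolding Tx_def \<iota>_def by blast
    then show "\<delta> \<le> int (card {j \<in> S. coeff c j \<noteq> 0})" using ceq d_eq by simp
  qed
qed

lemma weight_C_ge:
  assumes c: "c \<in> C" and cnz: "c \<noteq> 0"
  shows "2*u + 2*h + 1 \<le> weight n c"
proof -
  have cb: "\<forall>i\<ge>n. coeff c i = 0" using C_mem(2)[OF c] .
  have "2*u + 2*h + 1 \<le> card {i. i < n \<and> coeff c i \<noteq> 0}"
  proof (rule bch[where w = \<omega> and st = "t + 1 - u - h" and x = "coeff c"])
    show "\<And>i j. i < n \<Longrightarrow> j < n \<Longrightarrow> \<omega> ^ i = \<omega> ^ j \<Longrightarrow> i = j" by (rule omega_inj)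
    show "\<omega> \<noteq> 0" by (rule omega_nz)
    show "\<exists>i<n. coeff c i \<noteq> 0" by (rule nz_ex[OF cb cnz])
    fix l assume l: "l < 2*u + 2*h"
    define s where "s = t + 1 - u - h + l"
    have "int s \<in> I2" unfolding I2_def s_def using l t_big by auto
    then have mem: "\<omega>^s \<in> set_mult A B" unfolding AB_eq omega_pow by blast
    have "(\<Sum>i<n. coeff c i * \<omega>^(i*s)) = (\<Sum>i<n. coeff c i * (\<omega>^s)^i)"
      by (simp add: power_mult[symmetric] mult.commute)
    also have "\<dots> = poly c (\<omega>^s)" using cb by (simp add: bounded_poly)
    also have "\<dots> = 0" using C_mem(3)[OF c] mem by blast
    finally show "(\<Sum>i<n. coeff c i * \<omega>^(i*(t + 1 - u - h + l))) = 0" unfolding s_def .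
  qed
  then show ?thesis unfolding weight_def by simp
qed

end


context S
begin

lemma kd_int: "int kd = 2 * int t - 2 * int u - 4 * int h" using kd_eq t_big by simp

lemma exists_low:
  assumes hyp: "\<delta> - 2 < int n - int m - int dA"
  shows "\<exists>c\<in>C. c \<noteq> 0 \<and> weight n c \<le> 2*u + 2*h + 1"
proof -
  obtain v0 where v0: "v0 \<in> D" "v0 \<noteq> 0" "weight n v0 = dA" using v0_ex by blast
  define S0 where "S0 = {i. i < n \<and> coeff v0 i \<noteq> 0}"
  have cS0: "card S0 = dA" using v0(3) by (simp add: S0_def weight_def)
  have S0n: "S0 \<subseteq> {..<n}" unfolding S0_def by auto
  have fS0: "finite S0" unfolding S0_def by simp
  have dA_ub: "dA \<le> kd + 2*h" using hyp kd_int n_eq m_eq d_eq by linarith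
  have dA_lb: "2*h + 1 \<le> dA" using dA_ge t_big by simp
  have kd_ge: "2 \<le> kd" using kd_int t_big by linarith
  obtain S' where S': "S' \<subseteq> S0" "card S' = dA - (2*h+1)" "finite S'"
    using obtain_subset_with_card_n[of "dA - (2*h+1)" S0] cS0 by auto
  have cD: "card ({..<n} - S0) = n - dA" using card_Diff_subset[OF fS0 S0n] cS0 by simp
  have "kd + 2*h - dA \<le> n - dA" using n_N N_def by simp
  then obtain Rr where Rr: "Rr \<subseteq> {..<n} - S0" "card Rr = kd + 2*h - dA" "finite Rr"
    using obtain_subset_with_card_n[of "kd + 2*h - dA" "{..<n} - S0"] cD by auto
  define U where "U = S' \<union> Rr"
  have dis: "S' \<inter> Rr = {}" using S'(1) Rr(1) by auto
  have cU: "card U = kd - 1"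
    unfolding U_def using card_Un_disjoint[OF S'(3) Rr(3) dis] S'(2) Rr(2) dA_ub dA_lb by simp
  have fU: "finite U" unfolding U_def using S'(3) Rr(3) by simp
  define \<phi> where "\<phi> c = restrict (coeff c) U" for c :: "'a poly"
  have sub: "\<phi> ` C \<subseteq> PiE U (\<lambda>_. F.K)"
  proof
    fix G assume "G \<in> \<phi> ` C"
    then obtain c where c: "c \<in> C" "G = \<phi> c" by blast
    have "\<forall>i. coeff c i \<in> F.K" using C_mem(1)[OF c(1)] by (simp add: F.frobp_id_iff)
    then show "G \<in> PiE U (\<lambda>_. F.K)" unfolding c(2) \<phi>_def by (simp add: restrict_PiE_iff)
  qed
  have cP: "card (PiE U (\<lambda>_. F.K)) = q^(kd-1)" using fU cU by (simp add: card_PiE F.card_K)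
  have ninj: "\<not> inj_on \<phi> C"
  proof
    assume "inj_on \<phi> C"
    then have "card C \<le> card (PiE U (\<lambda>_. F.K))"
      using sub by (rule card_inj_on_le) (simp add: fU finite_PiE)
    then have "q^kd \<le> q^(kd-1)" using card_C cP by simp
    moreover have "q^(kd-1) < q^kd" using F.q2 kd_ge by (intro power_strict_increasing) auto
    ultimately show False by simp
  qed
  then obtain c1 c2 where c12: "c1 \<in> C" "c2 \<in> C" "c1 \<noteq> c2" "\<phi> c1 = \<phi> c2"
    unfolding inj_on_def by blast
  define c where "c = c1 - c2"
  have cC: "c \<in> C" unfolding c_def using C_diff c12 by blast
  have cnz: "c \<noteq> 0" unfolding c_def using c12 by simp
  have zU: "coeff c j = 0" if "j \<in> U" for j
    using fun_cong[OF c12(4), of j] that by (simp add: \<phi>_def c_def)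
  have zS0: "coeff c j = 0" if "j \<in> S0" for j
  proof (rule ccontr)
    assume nzj: "coeff c j \<noteq> 0"
    have eqset: "{i. i < n \<and> coeff v0 i * coeff c ((i + 0) mod n) \<noteq> 0} = {i. i < n \<and> coeff v0 i * coeff c i \<noteq> 0}"
      by auto
    have "\<exists>i<n. coeff v0 i * coeff c ((i + 0) mod n) \<noteq> 0"
      using that nzj unfolding S0_def by (intro exI[of _ j]) auto
    then have big: "2*h + 2 \<le> card {i. i < n \<and> coeff v0 i * coeff c i \<noteq> 0}"
      using loc[OF cC v0(1), of 0] eqset by simp
    have "{i. i < n \<and> coeff v0 i * coeff c i \<noteq> 0} \<subseteq> S0 - S'"
      using zU unfolding S0_def U_def by auto
    then have "card {i. i < n \<and> coeff v0 i * coeff c i \<noteq> 0} \<le> card (S0 - S')"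
      using fS0 by (intro card_mono) auto
    also have "\<dots> = 2*h + 1" using card_Diff_subset[OF S'(3) S'(1)] cS0 S'(2) dA_lb by simp
    finally show False using big by simp
  qed
  have "{i. i < n \<and> coeff c i \<noteq> 0} \<subseteq> {..<n} - (S0 \<union> Rr)"
    using zS0 zU unfolding U_def by auto
  then have "weight n c \<le> card ({..<n} - (S0 \<union> Rr))"
    unfolding weight_def by (intro card_mono) auto
  also have "\<dots> = n - card (S0 \<union> Rr)"
  proof -
    have "S0 \<union> Rr \<subseteq> {..<n}" using Rr(1) S0n by auto
    moreover have "finite (S0 \<union> Rr)" using fS0 Rr(3) by simp
    ultimately show ?thesis using card_Diff_subset[of "S0 \<union> Rr" "{..<n}"] by simp
  qed
  also have "card (S0 \<union> Rr) = dA + (kd + 2*h - dA)"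
    using card_Un_disjoint[OF fS0 Rr(3)] Rr cS0 by auto
  also have "n - (dA + (kd + 2*h - dA)) = 2*u + 2*h + 1"
    using dA_ub n_N N_def by simp
  finally show ?thesis using cC cnz by blast
qed

lemma main:
  "is_LRC n C (int dA - \<delta> + 1) \<delta> \<and>
   int (code_dim q C) = int n - int m - 2 * \<delta> + 3 \<and>
   (\<delta> - 2 < int n - int m - int dA \<longrightarrow>
      optimal_LRC q n C (int dA - \<delta> + 1) \<delta> \<and> int (min_dist n C) = int m + \<delta> - 1)"
proof (intro conjI impI)
  show "is_LRC n C (int dA - \<delta> + 1) \<delta>" by (rule LRC)
  show "int (code_dim q C) = int n - int m - 2 * \<delta> + 3"
    unfolding code_dim_C using kd_int n_eq m_eq d_eq by simp
  assume hyp: "\<delta> - 2 < int n - int m - int dA"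
  define WC where "WC = {weight n c | c. c \<in> C \<and> c \<noteq> 0}"
  have md: "min_dist n C = 2*u + 2*h + 1"
    unfolding min_dist_def WC_def[symmetric]
  proof (rule Min_eqI)
    have "WC \<subseteq> {..n}" unfolding WC_def using weight_le by auto
    then show "finite WC" by (rule finite_subset) simp
    show "\<And>y. y \<in> WC \<Longrightarrow> 2*u + 2*h + 1 \<le> y" unfolding WC_def using weight_C_ge by auto
    obtain c where c: "c \<in> C" "c \<noteq> 0" "weight n c \<le> 2*u + 2*h + 1" using exists_low[OF hyp] by blast
    then have "weight n c = 2*u + 2*h + 1" using weight_C_ge[OF c(1,2)] by simp
    then have "\<exists>c'. 2*u + 2*h + 1 = weight n c' \<and> c' \<in> C \<and> c' \<noteq> 0"
      using c(1,2) by (intro exI[of _ c]) simp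
    then show "2*u + 2*h + 1 \<in> WC" unfolding WC_def by simp
  qed
  show mdi: "int (min_dist n C) = int m + \<delta> - 1" using md m_eq d_eq by simp
  define r where "r = int dA - \<delta> + 1"
  define k where "k = int kd"
  have dA_ub: "int dA \<le> int kd + 2 * int h" using hyp kd_int n_eq m_eq d_eq by linarith
  have dA_lb: "int t - int u + 1 \<le> int dA" using dA_ge t_big by linarith
  have rpos: "0 < r" unfolding r_def using dA_lb t_big d_eq by linarith
  have rk: "r < k" unfolding r_def k_def using dA_ub d_eq by linarith
  have k2r: "k \<le> 2 * r"
  proof -
    have "int kd + 4 * int h + 2 \<le> 2 * int dA" using dA_lb kd_int by linarith
    moreover have "2 * r = 2 * int dA - 4 * int h - 2" unfolding r_def using d_eq by simp
    ultimately show ?thesis unfolding k_def by linarith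
  qed
  have "real_of_int r < real_of_int k" using rk by simp
  then have c1: "1 < real_of_int k / real_of_int r" using rpos by (simp add: field_simps)
  have "real_of_int k \<le> 2 * real_of_int r" using k2r by simp
  then have c2: "real_of_int k / real_of_int r \<le> 2" using rpos by (simp add: field_simps)
  have ceil: "\<lceil>real_of_int k / real_of_int r\<rceil> = 2"
    by (rule ceiling_unique) (use c1 c2 in auto)
  show "optimal_LRC q n C (int dA - \<delta> + 1) \<delta>"
    unfolding optimal_LRC_def Let_def code_dim_C r_def[symmetric] k_def[symmetric]
  proof (intro conjI)
    show "is_LRC n C r \<delta>" unfolding r_def by (rule LRC)
    show "int (min_dist n C) = int n - k - (\<lceil>real_of_int k / real_of_int r\<rceil> - 1) * (\<delta> - 1) + 1"
      unfolding ceil using md k_def kd_int n_eq d_eq by simp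
  qed
qed

end

theorem corollary5p3:
  fixes q n m b dA :: nat and A B :: "'a::{field,finite} set" and C :: "'a poly set" and \<delta> :: int and \<alpha> :: 'a
  assumes "prime_power q" and "card (UNIV :: 'a set) = q ^ 2"
    and "odd n" and "n dvd q + 1"
    and "primitive_root_unity n \<alpha>"
    and "m > 0" and "even m"
    and "b > 0" and "gcd b n = 1"
    and "even \<delta>" and "2 \<le> \<delta>" and "2 * \<delta> \<le> int n - int m + 1"
  assumes A_def: "A = {1} \<union> {ipow n \<alpha> (s * ((int n + 2 * int j - 1) div 2) * int b) | s j.
                   s \<in> {1, -1} \<and> 1 \<le> j \<and> j \<le> m div 2}"
    and B_def: "B = {ipow n \<alpha> (j * int b) | j. - ((\<delta> - 2) div 2) \<le> j \<and> j \<le> (\<delta> - 2) div 2}"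
    and dA_def: "dA = min_dist n (dual_code n (cyclic_code n A))"
    and C_def: "C = cyclic_code_q q n (set_mult A B)"
  shows "is_LRC n C (int dA - \<delta> + 1) \<delta> \<and>
         int (code_dim q C) = int n - int m - 2 * \<delta> + 3 \<and>
         (\<delta> - 2 < int n - int m - int dA \<longrightarrow>
            optimal_LRC q n C (int dA - \<delta> + 1) \<delta> \<and> int (min_dist n C) = int m + \<delta> - 1)"
proof -
  have "S q n m b dA A B C \<delta> \<alpha>"
    by (rule S.intro) (fact assms)+
  then show ?thesis by (rule S.main)
qed


end
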